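(* Let $(\Omega,\mathcal{F},P)$ be a probability space and $T:\Omega\to\Omega$ an invertible measurable transformation. Suppose that for every $A\in\mathcal{F}$ the limit $Q(A):=\lim_{n\to\infty}\frac{1}{n}\sum_{i=0}^{n-1}P(T^iA)$ exists. Then $Q$ is a $T$-invariant probability. Moreover, if $Q$ is ergodic, then $$\lim_{\substack{n+m\to\infty\\ m,n\ge0}}\frac{1}{m+n+1}\sum_{i=-m}^nP(B\cap T^iC)=P(B)Q(C)\quad\text{for all }B,C\in\mathcal{F}\qquad(\ast)$$ and for every $f\in L^1(\Omega,\mathcal{F},Q)$, $$\lim_{\substack{n+m\to\infty\\ m,n\ge0}}\frac{1}{m+n+1}\sum_{i=-m}^nf(T^i\omega)=\int f\,dQ\quad\text{for }P\text{-a.s. }\omega\in\Omega.\qquad(\ast\ast)$$ Conversely, if $(\ast)$ holds or $(\ast\ast)$ holds, then $Q$ is ergodic. In particular, $(\ast)$ and $(\ast\ast)$ are equivalent.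
   Context: $P$ need not be $T$-invariant. $\mathcal{I}=\{A\in\mathcal{F}:T^{-1}A=A\}$; a $T$-invariant probability $Q$ is ergodic if $Q(A)\in\{0,1\}$ for all $A\in\mathcal{I}$. *)

theory Defs
  imports "HOL-Probability.Probability"
begin

definition iterz :: "'a measure \<Rightarrow> ('a \<Rightarrow> 'a) \<Rightarrow> int \<Rightarrow> 'a \<Rightarrow> 'a" where
  "iterz M T i = (if 0 \<le> i then T ^^ nat i else (the_inv_into (space M) T) ^^ nat (- i))"

definition cesaro_avg :: "'a measure \<Rightarrow> ('a \<Rightarrow> 'a) \<Rightarrow> 'a set \<Rightarrow> nat \<Rightarrow> real" where
  "cesaro_avg M T A n = (\<Sum>i<n. measure M ((T ^^ i) ` A)) / real n"

definition sum_to_infty :: "(nat \<times> nat) filter" where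
  "sum_to_infty = filtercomap (\<lambda>(m, n). m + n) sequentially"

definition ergodic_for :: "'a measure \<Rightarrow> ('a \<Rightarrow> 'a) \<Rightarrow> 'a measure \<Rightarrow> bool" where
  "ergodic_for M T Q \<longleftrightarrow>
     (\<forall>A\<in>sets M. T -` A \<inter> space M = A \<longrightarrow> measure Q A = 0 \<or> measure Q A = 1)"

end

theory Submission
  imports Defs
begin


lemma eventually_sum_to_infty:
  "eventually P sum_to_infty \<longleftrightarrow> (\<exists>N. \<forall>m n. N \<le> m + n \<longrightarrow> P (m, n))"
  unfolding sum_to_infty_def eventually_filtercomap_at_top_linorder by auto

lemma tendsto_sum_to_infty_iff:
  "(g \<longlongrightarrow> L) sum_to_infty \<longleftrightarrow> (\<forall>e>0. \<exists>N. \<forall>m n. N \<le> m + n \<longrightarrow> dist (g (m, n)) L < e)"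
  unfolding tendsto_iff eventually_sum_to_infty by auto

lemma sum_to_infty_neq_bot: "sum_to_infty \<noteq> bot"
  unfolding sum_to_infty_def
  by (rule filtercomap_neq_bot) (auto simp: eventually_at_top_linorder, metis add_0 order_refl)

lemma sum_to_infty_seq:
  fixes g :: "nat \<times> nat \<Rightarrow> real"
  assumes "\<And>p. (\<forall>k. k \<le> fst (p k) + snd (p k)) \<Longrightarrow> (\<lambda>k. g (p k)) \<longlonglongrightarrow> L"
  shows "(g \<longlongrightarrow> L) sum_to_infty"
proof (rule ccontr)
  assume "\<not> ?thesis"
  then obtain e where e: "e > 0" "\<forall>N. \<exists>m n. N \<le> m + n \<and> \<not> dist (g (m, n)) L < e"
    unfolding tendsto_sum_to_infty_iff by auto
  then have "\<forall>N. \<exists>q. N \<le> fst q + snd q \<and> \<not> dist (g q) L < e"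
    by (metis fst_conv snd_conv)
  then obtain p where p: "\<And>N. N \<le> fst (p N) + snd (p N) \<and> \<not> dist (g (p N)) L < e"
    by metis
  have "(\<lambda>k. g (p k)) \<longlonglongrightarrow> L" using assms p by auto
  then have "eventually (\<lambda>k. dist (g (p k)) L < e) sequentially"
    using e(1) tendsto_iff[THEN iffD1] by blast
  then show False using p by (auto simp: eventually_at_top_linorder)
qed

lemma sum_to_infty_seq2:
  assumes "(g \<longlongrightarrow> L) sum_to_infty" "\<forall>k. k \<le> fst (p k) + snd (p k)"
  shows "(\<lambda>k. g (p k)) \<longlonglongrightarrow> L"
proof -
  have "filterlim p sum_to_infty sequentially"
    unfolding filterlim_def le_filter_def eventually_filtermap eventually_sum_to_infty
  proof (intro allI impI)
    fix P :: "nat \<times> nat \<Rightarrow> bool" assume "\<exists>N. \<forall>m n. N \<le> m + n \<longrightarrow> P (m, n)"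
    then obtain N where "\<forall>m n. N \<le> m + n \<longrightarrow> P (m, n)" by auto
    then show "eventually (\<lambda>x. P (p x)) sequentially"
      using assms(2) unfolding eventually_at_top_linorder
      by (metis le_trans prod.collapse)
  qed
  then show ?thesis using assms(1) by (rule filterlim_compose[rotated])
qed

lemma weighted_to_zero:
  fixes e :: "nat \<Rightarrow> real"
  assumes e: "e \<longlonglongrightarrow> 0" and f: "\<And>p. f p \<le> fst p + snd p"
  shows "((\<lambda>p. real (Suc (f p)) * e (f p) / real (fst p + snd p + 1)) \<longlongrightarrow> 0) sum_to_infty"
proof -
  obtain B where B: "B > 0" "\<And>n. norm (e n) \<le> B"
    using convergent_imp_Bseq[of e] e by (auto simp: Bseq_def convergent_def)
  show ?thesis unfolding tendsto_sum_to_infty_iff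
  proof (intro allI impI)
    fix \<epsilon> :: real assume "\<epsilon> > 0"
    then obtain N where N: "\<And>n. n \<ge> N \<Longrightarrow> norm (e n) < \<epsilon>"
      using e unfolding LIMSEQ_iff by auto
    obtain K :: nat where K: "K > 2 * real (Suc N) * B / \<epsilon>" using reals_Archimedean2 by blast
    show "\<exists>K. \<forall>m n. K \<le> m + n \<longrightarrow> dist (real (Suc (f (m, n))) * e (f (m, n)) / real (fst (m, n) + snd (m, n) + 1)) 0 < \<epsilon>"
    proof (intro exI allI impI)
      fix m n assume mn: "K \<le> m + n"
      define k where "k = f (m, n)"
      have k: "k \<le> m + n" using f[of "(m,n)"] by (simp add: k_def)
      have pos: "real (m + n + 1) > 0" by simp
      have "\<bar>real (Suc k) * e k / real (m + n + 1)\<bar> < \<epsilon>"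
      proof (cases "k \<ge> N")
        case True
        have "\<bar>real (Suc k) * e k\<bar> \<le> real (m + n + 1) * \<bar>e k\<bar>"
          using k by (simp add: abs_mult mult_right_mono)
        also have "\<dots> < real (m + n + 1) * \<epsilon>" using N[OF True] pos by simp
        finally show ?thesis using pos by (simp add: divide_less_eq abs_divide mult.commute)
      next
        case False
        have "\<bar>real (Suc k) * e k\<bar> \<le> real (Suc N) * B"
          using False B(2)[of k] unfolding abs_mult by (intro mult_mono) auto
        also have "\<dots> < \<epsilon> * K"
        proof -
          have "2 * real (Suc N) * B < \<epsilon> * K" using K \<open>\<epsilon> > 0\<close>
            by (simp add: pos_divide_less_eq mult.commute)
          moreover have "0 \<le> real (Suc N) * B" using B(1) by simp
          ultimately show ?thesis by linarith
        qed
        also have "\<dots> \<le> \<epsilon> * real (m + n + 1)" using mn \<open>\<epsilon> > 0\<close> by simp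
        finally show ?thesis using pos by (simp add: divide_less_eq abs_divide mult.commute)
      qed
      then show "dist (real (Suc (f (m, n))) * e (f (m, n)) / real (fst (m, n) + snd (m, n) + 1)) 0 < \<epsilon>"
        by (simp add: k_def dist_real_def)
    qed
  qed
qed

lemma combine_two_sided:
  fixes a b :: "nat \<Rightarrow> real"
  assumes a: "(\<lambda>n. a n / real n) \<longlonglongrightarrow> L" and b: "(\<lambda>n. b n / real n) \<longlonglongrightarrow> L"
  shows "((\<lambda>(m, n). (a (Suc n) + b (Suc m) + c) / real (m + n + 1)) \<longlongrightarrow> L) sum_to_infty"
proof -
  define e where "e n = a (Suc n) / real (Suc n) - L" for n
  define e' where "e' n = b (Suc n) / real (Suc n) - L" for n
  have e: "e \<longlonglongrightarrow> 0" unfolding e_def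
    using tendsto_diff[OF LIMSEQ_Suc[OF a] tendsto_const[of L]] by simp
  have e': "e' \<longlonglongrightarrow> 0" unfolding e'_def
    using tendsto_diff[OF LIMSEQ_Suc[OF b] tendsto_const[of L]] by simp
  have c0: "((\<lambda>p::nat\<times>nat. (L + c) / real (fst p + snd p + 1)) \<longlongrightarrow> 0) sum_to_infty"
  proof -
    have "(\<lambda>n. if n = 0 then L + c else 0) \<longlonglongrightarrow> (0::real)"
      by (rule tendsto_eventually) (auto simp: eventually_at_top_linorder intro!: exI[of _ 1])
    from weighted_to_zero[OF this, of "\<lambda>_. 0"] show ?thesis by simp
  qed
  have lim: "((\<lambda>p. L + (real (Suc (snd p)) * e (snd p) / real (fst p + snd p + 1)
     + real (Suc (fst p)) * e' (fst p) / real (fst p + snd p + 1) + (L + c) / real (fst p + snd p + 1)))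
     \<longlongrightarrow> L + (0 + 0 + 0)) sum_to_infty"
    by (intro tendsto_intros weighted_to_zero e e' c0) auto
  have eq: "\<And>p. (case p of (m, n) \<Rightarrow> (a (Suc n) + b (Suc m) + c) / real (m + n + 1)) =
      L + (real (Suc (snd p)) * e (snd p) / real (fst p + snd p + 1)
     + real (Suc (fst p)) * e' (fst p) / real (fst p + snd p + 1) + (L + c) / real (fst p + snd p + 1))"
  proof -
    fix p :: "nat \<times> nat" obtain m n where p: "p = (m, n)" by fastforce
    have X: "real (Suc n) * e n = a (Suc n) - real (Suc n) * L" unfolding e_def
      by (simp add: field_simps)
    have Y: "real (Suc m) * e' m = b (Suc m) - real (Suc m) * L" unfolding e'_def
      by (simp add: field_simps)
    have "L + (real (Suc n) * e n / real (m + n + 1) + real (Suc m) * e' m / real (m + n + 1)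
       + (L + c) / real (m + n + 1))
      = L + (real (Suc n) * e n + real (Suc m) * e' m + (L + c)) / real (m + n + 1)"
      by (simp add: add_divide_distrib)
    also have "\<dots> = (a (Suc n) + b (Suc m) + c) / real (m + n + 1)"
      unfolding X Y by (simp add: field_simps)
    finally show "?thesis p" by (simp add: p)
  qed
  show ?thesis using lim unfolding eq[abs_def, symmetric] by simp
qed



lemma measurable_funpow: "S \<in> measurable M M \<Longrightarrow> (S ^^ n) \<in> measurable M M"
  by (induction n) (auto intro: measurable_comp)

lemma avg_conv:
  fixes s :: "nat \<Rightarrow> real"
  assumes up: "\<And>k. \<exists>K. \<forall>n. s n - real n * (L + 1 / real (Suc k)) \<le> K"
    and lo: "\<And>k. \<exists>K. \<forall>n. real n * (L - 1 / real (Suc k)) - s n \<le> K"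
  shows "(\<lambda>n. s n / real n) \<longlonglongrightarrow> L"
  unfolding LIMSEQ_iff
proof (intro allI impI)
  fix r :: real assume r: "r > 0"
  then obtain k where k: "inverse (real (Suc k)) < r / 2"
    using reals_Archimedean[of "r/2"] by auto
  define e where "e = 1 / real (Suc k)"
  have e: "e < r / 2" "e > 0" using k by (auto simp: e_def inverse_eq_divide)
  obtain K1 where K1: "\<And>n. s n - real n * (L + e) \<le> K1" using up[of k] e_def by auto
  obtain K2 where K2: "\<And>n. real n * (L - e) - s n \<le> K2" using lo[of k] e_def by auto
  define K where "K = max 0 (max K1 K2)"
  have K: "K \<ge> 0" "K1 \<le> K" "K2 \<le> K" by (auto simp: K_def)
  obtain N :: nat where N: "N > 2 * K / r" using reals_Archimedean2 by blast
  show "\<exists>N. \<forall>n\<ge>N. norm (s n / real n - L) < r"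
  proof (intro exI allI impI)
    fix n assume n: "Suc N \<le> n"
    then have npos: "real n > 0" by simp
    have "2 * K / r \<ge> 0" using K(1) r by simp
    then have Npos: "real N > 0" using N by linarith
    have "K / real n \<le> K / real N" using n K(1) Npos
      by (intro divide_left_mono) auto
    also have "\<dots> < r / 2"
      using N r Npos by (simp add: divide_less_eq field_simps)
    finally have Kn: "K / real n < r / 2" .
    have "s n \<le> K + real n * (L + e)" using K1[of n] K by linarith
    then have "s n / real n \<le> (K + real n * (L + e)) / real n"
      using npos by (simp add: divide_right_mono)
    also have "\<dots> = K / real n + L + e" using npos by (simp add: field_simps)
    finally have a: "s n / real n - L < r" using Kn e by linarith
    have "real n * (L - e) - K \<le> s n" using K2[of n] K by linarith
    then have "(real n * (L - e) - K) / real n \<le> s n / real n"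
      using npos by (simp add: divide_right_mono)
    moreover have "(real n * (L - e) - K) / real n = L - e - K / real n"
      using npos by (simp add: field_simps)
    ultimately have b: "L - s n / real n < r" using Kn e by linarith
    show "norm (s n / real n - L) < r" using a b by (simp add: abs_less_iff)
  qed
qed

lemma bdd_shift:
  fixes v :: "nat \<Rightarrow> real"
  shows "bdd_above (range (\<lambda>n. v (Suc n) - c)) \<longleftrightarrow> bdd_above (range v)"
proof
  assume "bdd_above (range (\<lambda>n. v (Suc n) - c))"
  then obtain K where K: "\<And>n. v (Suc n) - c \<le> K" by (auto simp: bdd_above_def)
  have "v n \<le> max (v 0) (K + c)" for n using K[of "n - 1"] by (cases n) auto
  then show "bdd_above (range v)" by (auto simp: bdd_above_def)
next
  assume "bdd_above (range v)"
  then obtain K where K: "\<And>n. v n \<le> K" by (auto simp: bdd_above_def)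
  have "v (Suc n) - c \<le> K - c" for n using K[of "Suc n"] by auto
  then show "bdd_above (range (\<lambda>n. v (Suc n) - c))" unfolding bdd_above_def by (auto intro!: exI[of _ "K - c"])
qed

lemma bdd_nat_iff:
  fixes v :: "nat \<Rightarrow> real"
  shows "bdd_above (range v) \<longleftrightarrow> (\<exists>K::nat. \<forall>n. v n \<le> real K)"
proof
  assume "bdd_above (range v)"
  then obtain K where K: "\<And>n. v n \<le> K" by (auto simp: bdd_above_def)
  obtain K' :: nat where "K \<le> real K'" using real_arch_simple by blast
  then show "\<exists>K::nat. \<forall>n. v n \<le> real K" using K by (meson order_trans)
qed (auto simp: bdd_above_def)

locale mpt = prob_space Q for Q :: "'a measure" +
  fixes S :: "'a \<Rightarrow> 'a"
  assumes S_meas: "S \<in> measurable Q Q" and S_pres: "distr Q Q S = Q"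
begin

lemma Sn_meas: "S ^^ n \<in> measurable Q Q" using measurable_funpow[OF S_meas] .

lemma Sn_pres: "distr Q Q (S ^^ n) = Q"
proof (induction n)
  case 0 then show ?case by (simp add: id_def)
next
  case (Suc n)
  have "distr Q Q (S ^^ Suc n) = distr (distr Q Q (S ^^ n)) Q S"
    using distr_distr[OF S_meas Sn_meas[of n]] by simp
  then show ?case using Suc.IH S_pres by metis
qed

lemma integral_Sn: fixes g :: "'a \<Rightarrow> real" shows "g \<in> borel_measurable Q \<Longrightarrow> integral\<^sup>L Q (\<lambda>x. g ((S ^^ n) x)) = integral\<^sup>L Q g"
  using integral_distr[OF Sn_meas, of g n] Sn_pres by simp

lemma integrable_Sn: fixes g :: "'a \<Rightarrow> real" shows "integrable Q g \<Longrightarrow> integrable Q (\<lambda>x. g ((S ^^ n) x))"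
  using integrable_distr_eq[OF Sn_meas borel_measurable_integrable, of g n] Sn_pres by simp

lemma integral_S: fixes g :: "'a \<Rightarrow> real" shows "g \<in> borel_measurable Q \<Longrightarrow> integral\<^sup>L Q (\<lambda>x. g (S x)) = integral\<^sup>L Q g"
  using integral_distr[OF S_meas, of g] S_pres by simp

lemma integrable_S: fixes g :: "'a \<Rightarrow> real" shows "integrable Q g \<Longrightarrow> integrable Q (\<lambda>x. g (S x))"
  using integrable_distr_eq[OF S_meas borel_measurable_integrable, of g] S_pres by simp

definition Sg :: "('a \<Rightarrow> real) \<Rightarrow> nat \<Rightarrow> 'a \<Rightarrow> real" where
  "Sg g n x = (\<Sum>i<n. g ((S ^^ i) x))"

lemma Sg_meas[measurable]: "g \<in> borel_measurable Q \<Longrightarrow> Sg g n \<in> borel_measurable Q"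
  unfolding Sg_def by (intro borel_measurable_sum measurable_compose[OF Sn_meas]) auto

lemma Sg_0[simp]: "Sg g 0 x = 0" by (simp add: Sg_def)

lemma Sg_Suc: "Sg g (Suc n) x = g x + Sg g n (S x)"
  unfolding Sg_def sum.lessThan_Suc_shift by (simp add: funpow_Suc_right del: funpow.simps)

lemma Sg_abs: "\<bar>Sg g n x\<bar> \<le> Sg (\<lambda>x. \<bar>g x\<bar>) n x"
  unfolding Sg_def by (rule sum_abs)

lemma Sg_abs_mono: "n \<le> N \<Longrightarrow> Sg (\<lambda>x. \<bar>g x\<bar>) n x \<le> Sg (\<lambda>x. \<bar>g x\<bar>) N x"
  unfolding Sg_def by (rule sum_mono2) auto

lemma Sg_int: "integrable Q g \<Longrightarrow> integrable Q (Sg g n)"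
  unfolding Sg_def by (auto intro!: integrable_sum integrable_Sn)

definition Mx :: "('a \<Rightarrow> real) \<Rightarrow> nat \<Rightarrow> 'a \<Rightarrow> real" where
  "Mx g N x = Max ((\<lambda>k. Sg g k x) ` {..N})"

lemma Mx_ge: "k \<le> N \<Longrightarrow> Sg g k x \<le> Mx g N x"
  unfolding Mx_def by (rule Max_ge) auto

lemma Mx_nonneg: "0 \<le> Mx g N x"
  using Mx_ge[of 0 N g x] by simp

lemma Mx_attained: "\<exists>k\<le>N. Mx g N x = Sg g k x"
proof -
  have "Mx g N x \<in> (\<lambda>k. Sg g k x) ` {..N}" unfolding Mx_def by (rule Max_in) auto
  then show ?thesis by auto
qed

lemma Mx_meas[measurable]: "g \<in> borel_measurable Q \<Longrightarrow> Mx g N \<in> borel_measurable Q"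
  unfolding Mx_def by (rule borel_measurable_Max) auto

lemma Mx_int: assumes g: "integrable Q g" shows "integrable Q (Mx g N)"
proof -
  have i: "integrable Q (Sg (\<lambda>x. \<bar>g x\<bar>) N)" using g by (intro Sg_int) auto
  have m: "Mx g N \<in> borel_measurable Q" using g by auto
  have "AE x in Q. norm (Mx g N x) \<le> norm (Sg (\<lambda>x. \<bar>g x\<bar>) N x)"
  proof (rule AE_I2)
    fix x
    obtain k where k: "k \<le> N" "Mx g N x = Sg g k x" using Mx_attained by blast
    have "\<bar>Sg g k x\<bar> \<le> Sg (\<lambda>x. \<bar>g x\<bar>) N x" using Sg_abs Sg_abs_mono[OF k(1)] order_trans by blast
    moreover have "0 \<le> Sg (\<lambda>x. \<bar>g x\<bar>) N x" unfolding Sg_def by (auto intro: sum_nonneg)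
    ultimately show "norm (Mx g N x) \<le> norm (Sg (\<lambda>x. \<bar>g x\<bar>) N x)" using k by simp
  qed
  from Bochner_Integration.integrable_bound[OF i m this] show ?thesis .
qed

lemma maximal_pointwise:
  "Mx g N x - Mx g N (S x) \<le> (if Mx g N x > 0 then g x else 0)"
proof (cases "Mx g N x > 0")
  case True
  obtain k where k: "k \<le> N" "Mx g N x = Sg g k x" using Mx_attained by blast
  with True have "k \<noteq> 0" by (cases k) auto
  then obtain j where j: "k = Suc j" by (cases k) auto
  have "Sg g k x = g x + Sg g j (S x)" using j Sg_Suc by simp
  also have "\<dots> \<le> g x + Mx g N (S x)" using Mx_ge[of j N g "S x"] j k by simp
  finally show ?thesis using True k by simp
next
  case False
  then show ?thesis using Mx_nonneg[of g N "S x"] by simp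
qed

lemma maximal_integral:
  assumes g: "integrable Q g"
  shows "0 \<le> integral\<^sup>L Q (\<lambda>x. if Mx g N x > 0 then g x else 0)"
proof -
  have gm[measurable]: "g \<in> borel_measurable Q" using g by auto
  have i1: "integrable Q (Mx g N)" using Mx_int[OF g] .
  have i2: "integrable Q (\<lambda>x. Mx g N (S x))" using integrable_S[OF i1] .
  have h0: "integral\<^sup>L Q (\<lambda>x. Mx g N x - Mx g N (S x)) = 0"
    using Bochner_Integration.integral_diff[OF i1 i2] integral_S[of "Mx g N"] by simp
  have h1: "integral\<^sup>L Q (\<lambda>x. Mx g N x - Mx g N (S x)) \<le> integral\<^sup>L Q (\<lambda>x. if Mx g N x > 0 then g x else 0)"
  proof (rule integral_mono)
    show "integrable Q (\<lambda>x. Mx g N x - Mx g N (S x))" using i1 i2 by auto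
    show "integrable Q (\<lambda>x. if Mx g N x > 0 then g x else 0)"
      by (rule Bochner_Integration.integrable_bound[OF g]) (auto)
  qed (rule maximal_pointwise)
  from h0 h1 show ?thesis by simp
qed

lemma maximal_AE:
  assumes g: "integrable Q g" and ae: "AE x in Q. \<exists>k. Sg g k x > 0"
  shows "0 \<le> integral\<^sup>L Q g"
proof -
  have gm[measurable]: "g \<in> borel_measurable Q" using g by auto
  have "(\<lambda>N. integral\<^sup>L Q (\<lambda>x. if Mx g N x > 0 then g x else 0)) \<longlonglongrightarrow> integral\<^sup>L Q g"
  proof (rule integral_dominated_convergence[where w="\<lambda>x. \<bar>g x\<bar>"])
    show "AE x in Q. (\<lambda>N. if Mx g N x > 0 then g x else 0) \<longlonglongrightarrow> g x"
      using ae
    proof eventually_elim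
      case (elim x)
      then obtain k where k: "Sg g k x > 0" by auto
      have "eventually (\<lambda>N. (if Mx g N x > 0 then g x else 0) = g x) sequentially"
        unfolding eventually_at_top_linorder
      proof (intro exI[of _ k] allI impI)
        fix N assume "k \<le> N"
        then have "Mx g N x > 0" using k Mx_ge[of k N g x] by linarith
        then show "(if Mx g N x > 0 then g x else 0) = g x" by simp
      qed
      then show ?case by (rule tendsto_eventually)
    qed
  qed (use g in auto)
  then show ?thesis
    by (rule LIMSEQ_le_const) (use maximal_integral[OF g] in auto)
qed

definition Ebad :: "('a \<Rightarrow> real) \<Rightarrow> 'a set" where
  "Ebad g = {x \<in> space Q. \<not> bdd_above (range (\<lambda>n. Sg g n x))}"

lemma Ebad_sets: assumes [measurable]: "g \<in> borel_measurable Q" shows "Ebad g \<in> sets Q"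
proof -
  have "Ebad g = space Q - {x \<in> space Q. \<exists>K::nat. \<forall>n. Sg g n x \<le> real K}"
    unfolding Ebad_def bdd_nat_iff by auto
  also have "\<dots> \<in> sets Q" by measurable
  finally show ?thesis .
qed

lemma Ebad_inv: "S -` Ebad g \<inter> space Q = Ebad g"
proof -
  have "bdd_above (range (\<lambda>n. Sg g n (S x))) \<longleftrightarrow> bdd_above (range (\<lambda>n. Sg g n x))" for x
  proof -
    have "(\<lambda>n. Sg g n (S x)) = (\<lambda>n. Sg g (Suc n) x - g x)" by (auto simp: Sg_Suc)
    then show ?thesis using bdd_shift[of "\<lambda>n. Sg g n x" "g x"] by metis
  qed
  then show ?thesis unfolding Ebad_def using measurable_space[OF S_meas] by auto
qed

lemma bdd_AE:
  assumes erg: "\<forall>A\<in>sets Q. S -` A \<inter> space Q = A \<longrightarrow> measure Q A = 0 \<or> measure Q A = 1"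
    and g: "integrable Q g" and neg: "integral\<^sup>L Q g < 0"
  shows "AE x in Q. bdd_above (range (\<lambda>n. Sg g n x))"
proof -
  have E: "Ebad g \<in> sets Q" using g by (intro Ebad_sets) auto
  have "measure Q (Ebad g) \<noteq> 1"
  proof
    assume "measure Q (Ebad g) = 1"
    then have "AE x in Q. x \<in> Ebad g" by (intro AE_prob_1) simp
    then have "AE x in Q. \<exists>k. Sg g k x > 0"
    proof eventually_elim
      case (elim x)
      then have "\<not> (\<forall>n. Sg g n x \<le> 0)" unfolding Ebad_def by (auto simp: bdd_above_def)
      then show ?case by (auto simp: not_le)
    qed
    from maximal_AE[OF g this] neg show False by simp
  qed
  then have "measure Q (Ebad g) = 0" using erg E Ebad_inv by blast
  then have "Ebad g \<in> null_sets Q" using E by (simp add: emeasure_eq_measure null_sets_def)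
  from AE_not_in[OF this] AE_space show ?thesis
    by eventually_elim (auto simp: Ebad_def)
qed

theorem birkhoff:
  assumes erg: "\<forall>A\<in>sets Q. S -` A \<inter> space Q = A \<longrightarrow> measure Q A = 0 \<or> measure Q A = 1"
    and f: "integrable Q f"
  shows "AE x in Q. (\<lambda>n. Sg f n x / real n) \<longlonglongrightarrow> integral\<^sup>L Q f"
proof -
  define L where "L = integral\<^sup>L Q f"
  have up: "AE x in Q. bdd_above (range (\<lambda>n. Sg (\<lambda>x. f x - (L + 1 / real (Suc k))) n x))" for k
  proof (rule bdd_AE[OF erg])
    show "integrable Q (\<lambda>x. f x - (L + 1 / real (Suc k)))" using f by auto
    show "integral\<^sup>L Q (\<lambda>x. f x - (L + 1 / real (Suc k))) < 0"
      using f by (simp add: L_def prob_space)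
  qed
  have lo: "AE x in Q. bdd_above (range (\<lambda>n. Sg (\<lambda>x. (L - 1 / real (Suc k)) - f x) n x))" for k
  proof (rule bdd_AE[OF erg])
    show "integrable Q (\<lambda>x. (L - 1 / real (Suc k)) - f x)" using f by auto
    show "integral\<^sup>L Q (\<lambda>x. (L - 1 / real (Suc k)) - f x) < 0"
      using f by (simp add: L_def prob_space)
  qed
  have "AE x in Q. \<forall>k. bdd_above (range (\<lambda>n. Sg (\<lambda>x. f x - (L + 1 / real (Suc k))) n x))
      \<and> bdd_above (range (\<lambda>n. Sg (\<lambda>x. (L - 1 / real (Suc k)) - f x) n x))"
    unfolding AE_all_countable using up lo by (auto intro: AE_conjI)
  then show ?thesis
  proof eventually_elim
    case (elim x)
    have e1: "Sg (\<lambda>x. f x - c) n x = Sg f n x - real n * c" for c n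
      unfolding Sg_def by (simp add: sum_subtractf)
    have e2: "Sg (\<lambda>x. c - f x) n x = real n * c - Sg f n x" for c n
      unfolding Sg_def by (simp add: sum_subtractf)
    show ?case unfolding L_def[symmetric]
    proof (rule avg_conv)
      fix k
      from elim[rule_format, of k] show "\<exists>K. \<forall>n. Sg f n x - real n * (L + 1 / real (Suc k)) \<le> K"
        unfolding e1 by (auto simp: bdd_above_def)
      from elim[rule_format, of k] show "\<exists>K. \<forall>n. real n * (L - 1 / real (Suc k)) - Sg f n x \<le> K"
        unfolding e2 by (auto simp: bdd_above_def)
    qed
  qed
qed

end



lemma funpow_in: "\<forall>x\<in>X. f x \<in> X \<Longrightarrow> x \<in> X \<Longrightarrow> (f ^^ n) x \<in> X"
  by (induction n) auto

lemma img_funpow: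
  assumes f: "\<forall>x\<in>X. f x \<in> X" and g: "\<forall>x\<in>X. g x \<in> X"
    and fg: "\<forall>x\<in>X. f (g x) = x" and gf: "\<forall>x\<in>X. g (f x) = x" and A: "A \<subseteq> X"
  shows "(f ^^ n) ` A = (g ^^ n) -` A \<inter> X"
proof (induction n)
  case 0 then show ?case using A by auto
next
  case (Suc n)
  have "(f ^^ Suc n) ` A = f ` ((f ^^ n) ` A)" by (simp add: image_comp)
  also have "\<dots> = f ` ((g ^^ n) -` A \<inter> X)" using Suc by simp
  also have "\<dots> = (g ^^ Suc n) -` A \<inter> X"
  proof
    show "f ` ((g ^^ n) -` A \<inter> X) \<subseteq> (g ^^ Suc n) -` A \<inter> X"
      using f gf by (auto simp: funpow_Suc_right simp del: funpow.simps)
    show "(g ^^ Suc n) -` A \<inter> X \<subseteq> f ` ((g ^^ n) -` A \<inter> X)"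
    proof
      fix x assume x: "x \<in> (g ^^ Suc n) -` A \<inter> X"
      then have "g x \<in> (g ^^ n) -` A \<inter> X" using g by (auto simp: funpow_Suc_right simp del: funpow.simps)
      moreover have "x = f (g x)" using fg x by auto
      ultimately show "x \<in> f ` ((g ^^ n) -` A \<inter> X)" by blast
    qed
  qed
  finally show ?case .
qed

locale invsys = prob_space M for M :: "'a measure" +
  fixes T R :: "'a \<Rightarrow> 'a"
  assumes T_bij: "bij_betw T (space M) (space M)"
    and T_meas: "T \<in> measurable M M"
    and R_meas: "R \<in> measurable M M"
    and R_def: "R = the_inv_into (space M) T"
    and lim_ex: "\<forall>A\<in>sets M. convergent (cesaro_avg M T A)"
begin

lemma T_space: "x \<in> space M \<Longrightarrow> T x \<in> space M" using measurable_space[OF T_meas] .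
lemma R_space: "x \<in> space M \<Longrightarrow> R x \<in> space M" using measurable_space[OF R_meas] .
lemma RT: "x \<in> space M \<Longrightarrow> R (T x) = x"
  unfolding R_def using T_bij by (simp add: bij_betw_def the_inv_into_f_f)
lemma TR: "x \<in> space M \<Longrightarrow> T (R x) = x"
  unfolding R_def using T_bij by (simp add: bij_betw_def f_the_inv_into_f)

lemma Tn_img: "A \<subseteq> space M \<Longrightarrow> (T ^^ n) ` A = (R ^^ n) -` A \<inter> space M"
  by (rule img_funpow) (auto simp: T_space R_space RT TR)
lemma Rn_img: "A \<subseteq> space M \<Longrightarrow> (R ^^ n) ` A = (T ^^ n) -` A \<inter> space M"
  by (rule img_funpow) (auto simp: T_space R_space RT TR)

lemma Tn_space: "x \<in> space M \<Longrightarrow> (T ^^ n) x \<in> space M" by (rule funpow_in) (auto simp: T_space)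
lemma Rn_space: "x \<in> space M \<Longrightarrow> (R ^^ n) x \<in> space M" by (rule funpow_in) (auto simp: R_space)

lemma iterz_nat: "iterz M T (int n) = T ^^ n" by (simp add: iterz_def)
lemma iterz_neg: "iterz M T (- int n) = R ^^ n" by (cases "n = 0") (simp_all add: iterz_def R_def)

lemma iterz_cases: obtains n where "iterz M T i = T ^^ n" "iterz M T (- i) = R ^^ n"
  | n where "iterz M T i = R ^^ n" "iterz M T (- i) = T ^^ n"
proof -
  obtain n where "i = int n \<or> i = - int n" by (metis int_cases2)
  then show ?thesis
  proof
    assume "i = int n" then show ?thesis using that(1)[of n] by (simp add: iterz_nat iterz_neg)
  next
    assume "i = - int n" then show ?thesis using that(2)[of n] iterz_nat[of n] iterz_neg[of n] by simp
  qed
qed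

lemma iterz_meas: "iterz M T i \<in> measurable M M"
  by (cases i rule: iterz_cases) (auto intro: measurable_funpow T_meas R_meas)

lemma iterz_space: "x \<in> space M \<Longrightarrow> iterz M T i x \<in> space M"
  using measurable_space[OF iterz_meas] .

lemma iterz_img: "C \<subseteq> space M \<Longrightarrow> iterz M T i ` C = iterz M T (- i) -` C \<inter> space M"
  by (cases i rule: iterz_cases) (auto simp: Tn_img Rn_img)

lemma iterz_T: assumes that: "x \<in> space M" shows "iterz M T k (T x) = iterz M T (k + 1) x"
proof -
  obtain n where "k = int n \<or> k = - int (Suc n)" by (metis int_cases)
  then show ?thesis
  proof
    assume 1: "k = int n"
    then have "k + 1 = int (Suc n)" by simp
    then show ?thesis using 1 by (simp only: iterz_nat funpow_Suc_right o_apply)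
  next
    assume 2: "k = - int (Suc n)"
    then have "k + 1 = - int n" by simp
    then show ?thesis using 2 RT[OF that] by (simp only: iterz_neg funpow_Suc_right o_apply)
  qed
qed

lemma iterz_0: "iterz M T 0 x = x" by (simp add: iterz_def)

lemma inv_T: "T -` A \<inter> space M = A \<Longrightarrow> x \<in> space M \<Longrightarrow> T x \<in> A \<longleftrightarrow> x \<in> A" by auto
lemma inv_R: assumes "T -` A \<inter> space M = A" "x \<in> space M" shows "R x \<in> A \<longleftrightarrow> x \<in> A"
  using inv_T[OF assms(1) R_space[OF assms(2)]] TR[OF assms(2)] by simp
lemma inv_iterz: assumes "T -` A \<inter> space M = A" "x \<in> space M" shows "iterz M T i x \<in> A \<longleftrightarrow> x \<in> A"
proof -
  have "(T ^^ n) x \<in> A \<longleftrightarrow> x \<in> A" for n using assms(2)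
    by (induction n) (auto simp: inv_T[OF assms(1)] Tn_space)
  moreover have "(R ^^ n) x \<in> A \<longleftrightarrow> x \<in> A" for n using assms(2)
    by (induction n) (auto simp: inv_R[OF assms(1)] Rn_space)
  ultimately show ?thesis by (cases i rule: iterz_cases) auto
qed
lemma inv_Tn_img: assumes "T -` A \<inter> space M = A" shows "(T ^^ n) ` A = A"
proof -
  have A: "A \<subseteq> space M" using assms by auto
  have "(R ^^ n) x \<in> A \<longleftrightarrow> x \<in> A" if "x \<in> space M" for x
    using inv_iterz[OF assms that, of "- int n"] by (simp add: iterz_neg)
  then show ?thesis using Tn_img[OF A] A by auto
qed

abbreviation D :: "nat \<Rightarrow> 'a measure" where "D i \<equiv> distr M M (R ^^ i)"

lemma D_prob: "prob_space (D i)"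
  by (rule prob_space_distr) (rule measurable_funpow[OF R_meas])

lemma D_fin: "finite_measure (D i)"
  using D_prob[of i] unfolding prob_space_def by blast

lemma D_sets[simp]: "sets (D i) = sets M" by simp

lemma measure_D: "A \<in> sets M \<Longrightarrow> measure (D i) A = measure M ((T ^^ i) ` A)"
  by (simp add: measure_distr[OF measurable_funpow[OF R_meas]] Tn_img sets.sets_into_space)

lemma cesaro_D: "A \<in> sets M \<Longrightarrow> cesaro_avg M T A n = (\<Sum>i<n. measure (D i) A) / real n"
  by (simp add: cesaro_avg_def measure_D)

lemma cesaro_nonneg: "0 \<le> cesaro_avg M T A n"
  unfolding cesaro_avg_def by (auto intro!: divide_nonneg_nonneg sum_nonneg)

lemma cesaro_le1: "cesaro_avg M T A n \<le> 1"
proof -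
  have "(\<Sum>i<n. measure M ((T ^^ i) ` A)) \<le> (\<Sum>i<n. 1)" by (intro sum_mono) (rule prob_le_1)
  then show ?thesis unfolding cesaro_avg_def by (cases n) (auto simp: divide_le_eq)
qed

lemma cesaro_mono: "A \<in> sets M \<Longrightarrow> B \<in> sets M \<Longrightarrow> A \<subseteq> B \<Longrightarrow> cesaro_avg M T A n \<le> cesaro_avg M T B n"
  unfolding cesaro_D
  by (intro divide_right_mono sum_mono finite_measure.finite_measure_mono[OF D_fin]) auto

lemma cesaro_add: "A \<in> sets M \<Longrightarrow> B \<in> sets M \<Longrightarrow> A \<inter> B = {} \<Longrightarrow>
   cesaro_avg M T (A \<union> B) n = cesaro_avg M T A n + cesaro_avg M T B n"
  by (simp add: cesaro_D sets.Un finite_measure.finite_measure_Union[OF D_fin]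
        sum.distrib add_divide_distrib)

lemma cesaro_diff: "A \<in> sets M \<Longrightarrow> B \<in> sets M \<Longrightarrow> B \<subseteq> A \<Longrightarrow>
   cesaro_avg M T (A - B) n = cesaro_avg M T A n - cesaro_avg M T B n"
  by (simp add: cesaro_D sets.Diff finite_measure.finite_measure_Diff[OF D_fin]
        sum_subtractf diff_divide_distrib)

lemma cesaro_inv: "T -` A \<inter> space M = A \<Longrightarrow> n > 0 \<Longrightarrow> cesaro_avg M T A n = measure M A"
  unfolding cesaro_avg_def inv_Tn_img by simp

definition q :: "'a set \<Rightarrow> real" where "q A = lim (cesaro_avg M T A)"

lemma q_lim: "A \<in> sets M \<Longrightarrow> cesaro_avg M T A \<longlonglongrightarrow> q A"
  unfolding q_def using lim_ex convergent_LIMSEQ_iff by blast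

lemma q_nonneg: "A \<in> sets M \<Longrightarrow> 0 \<le> q A"
  by (rule LIMSEQ_le_const[OF q_lim]) (auto intro: cesaro_nonneg)

lemma q_le1: "A \<in> sets M \<Longrightarrow> q A \<le> 1"
  by (rule LIMSEQ_le_const2[OF q_lim]) (auto intro: cesaro_le1)

lemma q_add: "A \<in> sets M \<Longrightarrow> B \<in> sets M \<Longrightarrow> A \<inter> B = {} \<Longrightarrow> q (A \<union> B) = q A + q B"
proof -
  assume a: "A \<in> sets M" "B \<in> sets M" "A \<inter> B = {}"
  have "cesaro_avg M T (A \<union> B) = (\<lambda>n. cesaro_avg M T A n + cesaro_avg M T B n)"
    using a by (intro ext) (simp add: cesaro_add)
  then show ?thesis using q_lim[of "A \<union> B"] tendsto_add[OF q_lim[of A] q_lim[of B]] a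
    by (metis LIMSEQ_unique sets.Un)
qed

lemma q_inv: assumes "A \<in> sets M" "T -` A \<inter> space M = A" shows "q A = measure M A"
proof -
  have "eventually (\<lambda>n. cesaro_avg M T A n = measure M A) sequentially"
    unfolding eventually_at_top_linorder using cesaro_inv[OF assms(2)] by (intro exI[of _ 1]) auto
  then have "cesaro_avg M T A \<longlonglongrightarrow> measure M A" by (rule tendsto_eventually)
  then show ?thesis using q_lim[OF assms(1)] LIMSEQ_unique by blast
qed

lemma q_space: "q (space M) = 1"
proof -
  have "T -` space M \<inter> space M = space M" using T_space by auto
  then show ?thesis using q_inv[of "space M"] by (simp add: prob_space)
qed

lemma q_empty: "q {} = 0"
  using q_inv[of "{}"] by auto

end



context invsys begin

lemma q_mono: "A \<in> sets M \<Longrightarrow> B \<in> sets M \<Longrightarrow> A \<subseteq> B \<Longrightarrow> q A \<le> q B"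
  by (rule LIMSEQ_le[OF q_lim q_lim]) (auto intro: cesaro_mono)

lemma cesaro_empty: "cesaro_avg M T {} n = 0" by (simp add: cesaro_avg_def)

lemma cesaro_lim_decseq:
  assumes A: "range A \<subseteq> sets M" "decseq A" "(\<Inter>i. A i) = {}"
  shows "(\<lambda>k. cesaro_avg M T (A k) n) \<longlonglongrightarrow> 0"
proof -
  have "(\<lambda>k. measure (D i) (A k)) \<longlonglongrightarrow> measure (D i) (\<Inter>i. A i)" for i
    by (rule finite_measure.finite_Lim_measure_decseq[OF D_fin]) (use A in auto)
  then have "(\<lambda>k. measure (D i) (A k)) \<longlonglongrightarrow> 0" for i using A(3) by simp
  then have "(\<lambda>k. (\<Sum>i<n. measure (D i) (A k)) * inverse (real n)) \<longlonglongrightarrow> (\<Sum>i<n. 0) * inverse (real n)"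
    by (intro tendsto_mult_right tendsto_sum) auto
  moreover have "cesaro_avg M T (A k) n = (\<Sum>i<n. measure (D i) (A k)) / real n" for k
    using A by (intro cesaro_D) auto
  ultimately show ?thesis by (simp add: divide_inverse)
qed

lemma q_cont:
  assumes A: "range A \<subseteq> sets M" "decseq A" "(\<Inter>i. A i) = {}"
  shows "(\<lambda>i. q (A i)) \<longlonglongrightarrow> 0"
proof -
  have Asets: "A k \<in> sets M" for k using A by auto
  have dec: "q (A j) \<le> q (A i)" if "i \<le> j" for i j
    using q_mono[OF Asets Asets] A(2) that by (auto simp: decseq_def)
  have main: "\<exists>k. q (A k) < \<delta>" if \<delta>0: "\<delta> > 0" for \<delta>
  proof (rule ccontr)
    assume "\<not> ?thesis"
    then have \<delta>: "\<And>k. \<delta> \<le> q (A k)" by (auto simp: not_less)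
    define c where "c k n = cesaro_avg M T (A k) n" for k n
    have nf_ex: "\<exists>n>n0. c k n > 3 * \<delta> / 4" for k n0
    proof -
      have "eventually (\<lambda>n. c k n > 3 * \<delta> / 4) sequentially"
        unfolding c_def by (rule order_tendstoD(1)[OF q_lim[OF Asets]]) (use \<delta>[of k] \<delta>0 in auto)
      then obtain N where "\<And>n. n \<ge> N \<Longrightarrow> c k n > 3 * \<delta> / 4" by (auto simp: eventually_at_top_linorder)
      then show ?thesis by (intro exI[of _ "max N (Suc n0)"]) auto
    qed
    have kf_ex: "\<exists>k'>k. c k' n < \<delta> / 4" for k n
    proof -
      have "eventually (\<lambda>k'. c k' n < \<delta> / 4) sequentially"
        unfolding c_def by (rule order_tendstoD(2)[OF cesaro_lim_decseq[OF A]]) (use \<delta>0 in auto)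
      then obtain N where "\<And>k'. k' \<ge> N \<Longrightarrow> c k' n < \<delta> / 4" by (auto simp: eventually_at_top_linorder)
      then show ?thesis by (intro exI[of _ "max N (Suc k)"]) auto
    qed
    define nf where "nf k n0 = (SOME n. n > n0 \<and> c k n > 3 * \<delta> / 4)" for k n0
    define kf where "kf k n = (SOME k'. k' > k \<and> c k' n < \<delta> / 4)" for k n
    have nf: "\<And>k n0. nf k n0 > n0 \<and> c k (nf k n0) > 3 * \<delta> / 4"
      unfolding nf_def using nf_ex by (rule someI_ex)
    have kf: "\<And>k n. kf k n > k \<and> c (kf k n) n < \<delta> / 4"
      unfolding kf_def using kf_ex by (rule someI_ex)
    define sq where "sq = rec_nat (0::nat, nf 0 0) (\<lambda>_ p. (kf (fst p) (snd p), nf (kf (fst p) (snd p)) (snd p)))"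
    define kk where "kk j = fst (sq j)" for j
    define nn where "nn j = snd (sq j)" for j
    have sq0: "kk 0 = 0" "nn 0 = nf 0 0" by (simp_all add: kk_def nn_def sq_def)
    have sqS: "kk (Suc j) = kf (kk j) (nn j)" "nn (Suc j) = nf (kk (Suc j)) (nn j)" for j
      by (simp_all add: kk_def nn_def sq_def)
    have big: "c (kk j) (nn j) > 3 * \<delta> / 4" for j
    proof (cases j)
      case 0 then show ?thesis using nf[of 0 0] by (simp add: sq0)
    next
      case (Suc j') then show ?thesis using nf[of "nn j'" "kk (Suc j')"] by (simp add: sqS)
    qed
    have small: "c (kk (Suc j)) (nn j) < \<delta> / 4" for j
      using kf[of "kk j" "nn j"] by (simp add: sqS)
    have kk_mono: "strict_mono kk" unfolding strict_mono_Suc_iff by (simp add: sqS kf)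
    have nn_mono: "strict_mono nn" unfolding strict_mono_Suc_iff by (simp add: sqS nf)
    define B where "B j = A (kk j) - A (kk (Suc j))" for j
    have Bsets: "B j \<in> sets M" for j unfolding B_def using Asets by auto
    have Asub: "A (kk j') \<subseteq> A (kk j)" if "j \<le> j'" for j j'
      using A(2) strict_mono_less_eq[OF kk_mono] that by (auto simp: decseq_def)
    have cB: "cesaro_avg M T (B j) (nn j) > \<delta> / 2" for j
    proof -
      have "cesaro_avg M T (B j) (nn j) = c (kk j) (nn j) - c (kk (Suc j)) (nn j)"
        unfolding B_def c_def by (rule cesaro_diff) (use Asets Asub in auto)
      then show ?thesis using big[of j] small[of j] by simp
    qed
    have Bdisj: "B j \<inter> B j' = {}" if "j < j'" for j j'
    proof -
      have "B j' \<subseteq> A (kk (Suc j))" unfolding B_def using Asub[of "Suc j" j'] that by auto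
      then show ?thesis unfolding B_def by auto
    qed
    obtain Nn :: nat where Nn: "real Nn > 2 / \<delta>" using reals_Archimedean2 by blast
    have "2 / \<delta> > 0" using \<delta>0 by simp
    then have Nn0: "Nn > 0" using Nn by linarith
    define F where "F r = (\<Union>j\<in>{j. j mod Nn = r}. B j)" for r
    have Fsets: "F r \<in> sets M" for r
      unfolding F_def by (rule sets.countable_UN') (auto intro: Bsets)
    have Fdisj: "F r \<inter> F r' = {}" if "r \<noteq> r'" for r r'
    proof -
      have "B j \<inter> B j' = {}" if "j mod Nn = r" "j' mod Nn = r'" for j j'
      proof -
        have "j \<noteq> j'" using that \<open>r \<noteq> r'\<close> by auto
        then show ?thesis using Bdisj[of j j'] Bdisj[of j' j] by (auto simp: linorder_neq_iff)
      qed
      then show ?thesis unfolding F_def by blast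
    qed
    have Fbig: "\<delta> / 2 \<le> q (F r)" if r: "r < Nn" for r
    proof -
      define js where "js t = r + Nn * t" for t
      have sm: "strict_mono (nn \<circ> js)"
        by (rule strict_monoI) (use Nn0 in \<open>auto simp: js_def intro!: strict_monoD[OF nn_mono]\<close>)
      have "(cesaro_avg M T (F r) \<circ> (nn \<circ> js)) \<longlonglongrightarrow> q (F r)"
        by (rule LIMSEQ_subseq_LIMSEQ[OF q_lim[OF Fsets] sm])
      moreover have "\<delta> / 2 \<le> (cesaro_avg M T (F r) \<circ> (nn \<circ> js)) t" for t
      proof -
        have "js t mod Nn = r" unfolding js_def using r by simp
        then have "B (js t) \<subseteq> F r" unfolding F_def by auto
        then have "cesaro_avg M T (B (js t)) (nn (js t)) \<le> cesaro_avg M T (F r) (nn (js t))"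
          by (intro cesaro_mono Bsets Fsets)
        then show ?thesis using cB[of "js t"] by simp
      qed
      ultimately show ?thesis by (intro LIMSEQ_le_const) auto
    qed
    have sumc: "(\<Sum>r<K. cesaro_avg M T (F r) n) = cesaro_avg M T (\<Union>r<K. F r) n" for K n
    proof (induction K)
      case 0 then show ?case by (simp add: cesaro_empty)
    next
      case (Suc K)
      have "(\<Union>r<Suc K. F r) = F K \<union> (\<Union>r<K. F r)" by (auto simp: lessThan_Suc)
      moreover have "F K \<inter> (\<Union>r<K. F r) = {}"
      proof -
        have "F K \<inter> F r = {}" if "r < K" for r using Fdisj[of K r] that by simp
        then show ?thesis by blast
      qed
      moreover have "(\<Union>r<K. F r) \<in> sets M" using Fsets by auto
      ultimately show ?case using Suc by (simp add: cesaro_add Fsets)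
    qed
    have "(\<lambda>n. \<Sum>r<Nn. cesaro_avg M T (F r) n) \<longlonglongrightarrow> (\<Sum>r<Nn. q (F r))"
      by (intro tendsto_sum q_lim Fsets)
    then have "(\<Sum>r<Nn. q (F r)) \<le> 1"
      by (rule LIMSEQ_le_const2) (auto simp: sumc cesaro_le1)
    moreover have "real Nn * (\<delta> / 2) \<le> (\<Sum>r<Nn. q (F r))"
      using sum_bounded_below[of "{..<Nn}" "\<delta> / 2" "\<lambda>r. q (F r)"] Fbig by simp
    moreover have "real Nn * (\<delta> / 2) > 1" using Nn \<delta>0 by (simp add: field_simps)
    ultimately show False by linarith
  qed
  show ?thesis unfolding LIMSEQ_iff
  proof (intro allI impI)
    fix r :: real assume "r > 0"
    then obtain k where k: "q (A k) < r" using main by blast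
    have "norm (q (A n)) < r" if "n \<ge> k" for n
      using dec[OF that] q_nonneg[OF Asets, of n] k by simp
    then show "\<exists>N. \<forall>n\<ge>N. norm (q (A n) - 0) < r" by auto
  qed
qed

definition QQ :: "'a measure" where
  "QQ = measure_of (space M) (sets M) (\<lambda>A. ennreal (q A))"

lemma QQ_pos: "positive (sets M) (\<lambda>A. ennreal (q A))"
  by (simp add: positive_def q_empty)

lemma QQ_ca: "countably_additive (sets M) (\<lambda>A. ennreal (q A))"
proof (rule ring_of_sets.empty_continuous_imp_countably_additive[OF sets.ring_of_sets_axioms QQ_pos])
  show "additive (sets M) (\<lambda>A. ennreal (q A))"
    by (auto simp: additive_def q_add q_nonneg ennreal_plus)
  show "\<forall>A\<in>sets M. ennreal (q A) \<noteq> \<infinity>" by simp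
  fix A :: "nat \<Rightarrow> 'a set" assume "range A \<subseteq> sets M" "decseq A" "(\<Inter>i. A i) = {}"
  from tendsto_ennrealI[OF q_cont[OF this]] show "(\<lambda>i. ennreal (q (A i))) \<longlonglongrightarrow> 0" by simp
qed

lemma sets_QQ[simp]: "sets QQ = sets M"
  unfolding QQ_def by (rule sets.sets_measure_of_eq)

lemma space_QQ[simp]: "space QQ = space M"
  unfolding QQ_def by (rule sets.space_measure_of_eq)

lemma emeasure_QQ: "A \<in> sets M \<Longrightarrow> emeasure QQ A = ennreal (q A)"
  unfolding QQ_def by (rule emeasure_measure_of_sigma[OF sets.sigma_algebra_axioms QQ_pos QQ_ca])

lemma measure_QQ: "A \<in> sets M \<Longrightarrow> measure QQ A = q A"
  by (simp add: measure_def emeasure_QQ q_nonneg)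

lemma prob_QQ: "prob_space QQ"
  by (rule prob_spaceI) (simp add: emeasure_QQ q_space)

end


context invsys begin

lemma T_img_pre: assumes "A \<subseteq> space M" shows "T ` (T -` A \<inter> space M) = A"
proof
  show "T ` (T -` A \<inter> space M) \<subseteq> A" by auto
  show "A \<subseteq> T ` (T -` A \<inter> space M)"
  proof
    fix y assume y: "y \<in> A"
    then have "R y \<in> T -` A \<inter> space M" "y = T (R y)" using TR R_space assms by auto
    then show "y \<in> T ` (T -` A \<inter> space M)" by blast
  qed
qed

lemma T_pre_img: "A \<subseteq> space M \<Longrightarrow> T -` (T ` A) \<inter> space M = A"
  using T_bij by (auto simp: bij_betw_def inj_on_def)

lemma q_Tinv:
  assumes A: "A \<in> sets M"
  shows "q (T -` A \<inter> space M) = q A"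
proof -
  define A' where "A' = T -` A \<inter> space M"
  have A': "A' \<in> sets M" unfolding A'_def using measurable_sets[OF T_meas A] .
  have TA': "T ` A' = A" unfolding A'_def using T_img_pre sets.sets_into_space[OF A] by blast
  have img: "(T ^^ Suc i) ` A' = (T ^^ i) ` A" for i
  proof -
    have "(T ^^ Suc i) ` A' = (T ^^ i) ` (T ` A')"
      by (simp add: funpow_Suc_right image_comp del: funpow.simps)
    then show ?thesis using TA' by simp
  qed
  have eq: "cesaro_avg M T A' (Suc n) = measure M A' * (1 / real (Suc n))
      + (real n / real (Suc n)) * cesaro_avg M T A n" for n
  proof -
    define Sa where "Sa = (\<Sum>i<n. measure M ((T ^^ i) ` A))"
    have s: "(\<Sum>i<Suc n. measure M ((T ^^ i) ` A')) = measure M A' + Sa"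
      unfolding sum.lessThan_Suc_shift img Sa_def by simp
    have c1: "cesaro_avg M T A' (Suc n) = (measure M A' + Sa) / real (Suc n)"
      unfolding cesaro_avg_def s ..
    have c2: "cesaro_avg M T A n = Sa / real n" unfolding cesaro_avg_def Sa_def ..
    show ?thesis
    proof (cases "n = 0")
      case True then show ?thesis unfolding c1 c2 by (simp add: Sa_def)
    next
      case False
      have "(real n / real (Suc n)) * (Sa / real n) = Sa / real (Suc n)" using False by simp
      then show ?thesis unfolding c1 c2 by (simp add: add_divide_distrib)
    qed
  qed
  have lim1: "(\<lambda>n. 1 / real (Suc n)) \<longlonglongrightarrow> 0"
    using LIMSEQ_Suc[OF lim_inverse_n'] by simp
  have lim2: "(\<lambda>n. real n / real (Suc n)) \<longlonglongrightarrow> 1"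
  proof -
    have "(\<lambda>n. 1 - 1 / real (Suc n)) \<longlonglongrightarrow> 1 - 0" by (intro tendsto_intros lim1)
    moreover have "1 - 1 / real (Suc n) = real n / real (Suc n)" for n by (simp add: field_simps)
    ultimately show ?thesis by simp
  qed
  have "(\<lambda>n. cesaro_avg M T A' (Suc n)) \<longlonglongrightarrow> measure M A' * 0 + 1 * q A"
    unfolding eq by (intro tendsto_intros lim1 lim2 q_lim A)
  moreover have "(\<lambda>n. cesaro_avg M T A' (Suc n)) \<longlonglongrightarrow> q A'"
    using LIMSEQ_Suc[OF q_lim[OF A']] .
  ultimately have "q A' = measure M A' * 0 + 1 * q A" by (rule LIMSEQ_unique[rotated])
  then show ?thesis by (simp add: A'_def)
qed

lemma T_meas_QQ: "T \<in> measurable QQ QQ"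
  using T_meas measurable_cong_sets[of QQ M QQ M] by simp
lemma R_meas_QQ: "R \<in> measurable QQ QQ"
  using R_meas measurable_cong_sets[of QQ M QQ M] by simp

lemma QQ_T_pres: "distr QQ QQ T = QQ"
proof (rule measure_eqI)
  fix A assume "A \<in> sets (distr QQ QQ T)"
  then have A: "A \<in> sets M" by simp
  have "emeasure (distr QQ QQ T) A = emeasure QQ (T -` A \<inter> space M)"
    using emeasure_distr[OF T_meas_QQ, of A] A by simp
  also have "\<dots> = ennreal (q A)"
    using emeasure_QQ[OF measurable_sets[OF T_meas A]] q_Tinv[OF A] by simp
  finally show "emeasure (distr QQ QQ T) A = emeasure QQ A" using emeasure_QQ[OF A] by simp
qed simp

lemma QQ_R_pres: "distr QQ QQ R = QQ"
proof (rule measure_eqI)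
  fix A assume "A \<in> sets (distr QQ QQ R)"
  then have A: "A \<in> sets M" by simp
  have As: "A \<subseteq> space M" using sets.sets_into_space[OF A] .
  have RA: "R -` A \<inter> space M = T ` A" using Tn_img[OF As, of 1] by simp
  have TA: "T ` A \<in> sets M" using measurable_sets[OF R_meas A] RA by simp
  have "emeasure (distr QQ QQ R) A = emeasure QQ (T ` A)"
    using emeasure_distr[OF R_meas_QQ, of A] A RA by simp
  also have "\<dots> = ennreal (q A)"
    using emeasure_QQ[OF TA] q_Tinv[OF TA] T_pre_img[OF As] by simp
  finally show "emeasure (distr QQ QQ R) A = emeasure QQ A" using emeasure_QQ[OF A] by simp
qed simp

lemma mpt_T: "mpt QQ T"
  unfolding mpt_def mpt_axioms_def using prob_QQ T_meas_QQ QQ_T_pres by simp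
lemma mpt_R: "mpt QQ R"
  unfolding mpt_def mpt_axioms_def using prob_QQ R_meas_QQ QQ_R_pres by simp

lemma iterz_meas_QQ: "iterz M T i \<in> measurable QQ QQ"
  using iterz_meas measurable_cong_sets[of QQ M QQ M] by simp

lemma QQ_iterz_pres: "distr QQ QQ (iterz M T i) = QQ"
  by (cases i rule: iterz_cases) (auto simp: mpt.Sn_pres[OF mpt_T] mpt.Sn_pres[OF mpt_R])

lemma abs_cont:
  assumes N: "N \<in> sets M" and QN: "measure QQ N = 0"
  shows "measure M N = 0"
proof -
  define G where "G = (\<Union>k\<in>(UNIV :: int set). iterz M T k -` N \<inter> space M)"
  have G: "G \<in> sets M" unfolding G_def
    by (rule sets.countable_UN') (auto intro: measurable_sets[OF iterz_meas N])
  have "iterz M T k -` N \<inter> space M \<in> null_sets QQ" for k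
  proof -
    have "emeasure QQ (iterz M T k -` N \<inter> space QQ) = emeasure (distr QQ QQ (iterz M T k)) N"
      using emeasure_distr[OF iterz_meas_QQ, of N k] N by simp
    also have "\<dots> = emeasure QQ N" by (simp add: QQ_iterz_pres)
    also have "\<dots> = 0" using QN N by (simp add: emeasure_QQ measure_QQ)
    finally show ?thesis using measurable_sets[OF iterz_meas N, of k] by (simp add: null_sets_def)
  qed
  then have "G \<in> null_sets QQ" unfolding G_def by (intro null_sets_UN') auto
  then have qG: "q G = 0" using G by (simp add: null_sets_def emeasure_QQ q_nonneg)
  have inv: "T -` G \<inter> space M = G"
  proof -
    have "T x \<in> G \<longleftrightarrow> x \<in> G" if x: "x \<in> space M" for x
    proof -
      have "T x \<in> G \<longleftrightarrow> (\<exists>k. iterz M T k (T x) \<in> N)" unfolding G_def using T_space[OF x] by auto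
      also have "\<dots> \<longleftrightarrow> (\<exists>k. iterz M T (k + 1) x \<in> N)" using iterz_T[OF x] by simp
      also have "\<dots> \<longleftrightarrow> (\<exists>k. iterz M T k x \<in> N)"
      proof
        assume "\<exists>k. iterz M T (k + 1) x \<in> N" then show "\<exists>k. iterz M T k x \<in> N" by blast
      next
        assume "\<exists>k. iterz M T k x \<in> N" then obtain k where "iterz M T k x \<in> N" by blast
        then have "iterz M T ((k - 1) + 1) x \<in> N" by simp
        then show "\<exists>k. iterz M T (k + 1) x \<in> N" by blast
      qed
      also have "\<dots> \<longleftrightarrow> x \<in> G" unfolding G_def using x by auto
      finally show ?thesis .
    qed
    then show ?thesis using sets.sets_into_space[OF G] by auto
  qed
  have "measure M G = 0" using q_inv[OF G inv] qG by simp
  moreover have NG: "N \<subseteq> G"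
  proof
    fix x assume x: "x \<in> N"
    then have "x \<in> iterz M T 0 -` N \<inter> space M" using sets.sets_into_space[OF N] by (auto simp: iterz_0)
    then show "x \<in> G" unfolding G_def by blast
  qed
  have "measure M N \<le> measure M G" by (rule finite_measure_mono[OF NG G])
  ultimately show ?thesis using measure_nonneg[of M N] \<open>measure M N \<le> measure M G\<close> by linarith
qed

lemma AE_transfer:
  assumes "AE x in QQ. P x" shows "AE x in M. P x"
proof -
  from assms obtain N where N: "{x \<in> space QQ. \<not> P x} \<subseteq> N" "emeasure QQ N = 0" "N \<in> sets QQ"
    by (rule AE_E)
  then have "measure QQ N = 0" by (simp add: measure_def)
  then have "measure M N = 0" using abs_cont N by simp
  then have "emeasure M N = 0" using N by (simp add: emeasure_eq_measure)
  then show ?thesis using N by (intro AE_I[of _ _ N]) auto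
qed

end


lemma sum_split_int:
  fixes F :: "int \<Rightarrow> real"
  shows "(\<Sum>i\<in>{- int m..int n}. F i) = (\<Sum>k<Suc n. F (int k)) + (\<Sum>k<Suc m. F (- int k)) - F 0"
proof (induction n)
  case 0
  show ?case
  proof (induction m)
    case 0 then show ?case by simp
  next
    case (Suc m)
    have "{- int (Suc m)..int 0} = insert (- int (Suc m)) {- int m..int 0}" by auto
    then show ?case using Suc by simp
  qed
next
  case (Suc n)
  have "{- int m..int (Suc n)} = insert (int (Suc n)) {- int m..int n}" by auto
  then show ?case using Suc by simp
qed

lemma sum_neg_int:
  fixes g :: "int \<Rightarrow> real"
  shows "(\<Sum>i\<in>{- int m..int n}. g (- i)) = (\<Sum>j\<in>{- int n..int m}. g j)"
proof -
  have "uminus ` {- int m..int n} = {- int n..int m}" by simp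
  then have "(\<Sum>j\<in>{- int n..int m}. g j) = (\<Sum>j\<in>uminus ` {- int m..int n}. g j)" by simp
  also have "\<dots> = (\<Sum>i\<in>{- int m..int n}. g (- i))" by (subst sum.reindex) (auto simp: inj_on_def)
  finally show ?thesis by simp
qed

context invsys begin

lemma erg_T: "ergodic_for M T QQ \<Longrightarrow> \<forall>A\<in>sets QQ. T -` A \<inter> space QQ = A \<longrightarrow> measure QQ A = 0 \<or> measure QQ A = 1"
  by (simp add: ergodic_for_def)

lemma R_inv_imp_T_inv: assumes A: "A \<in> sets M" and RA: "R -` A \<inter> space M = A" shows "T -` A \<inter> space M = A"
proof -
  have "T x \<in> A \<longleftrightarrow> x \<in> A" if x: "x \<in> space M" for x
  proof -
    have "T x \<in> A \<longleftrightarrow> R (T x) \<in> A" using RA T_space[OF x] by auto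
    then show ?thesis using RT[OF x] by simp
  qed
  then show ?thesis using sets.sets_into_space[OF A] by auto
qed

lemma erg_R: "ergodic_for M T QQ \<Longrightarrow> \<forall>A\<in>sets QQ. R -` A \<inter> space QQ = A \<longrightarrow> measure QQ A = 0 \<or> measure QQ A = 1"
  using R_inv_imp_T_inv by (simp add: ergodic_for_def)

lemma two_sided_AE:
  assumes erg: "ergodic_for M T QQ" and f: "integrable QQ f"
  shows "AE \<omega> in M. ((\<lambda>(m, n). (\<Sum>i\<in>{- int m..int n}. f (iterz M T i \<omega>)) / real (m + n + 1))
            \<longlongrightarrow> integral\<^sup>L QQ f) sum_to_infty"
proof -
  have "AE \<omega> in QQ. (\<lambda>n. mpt.Sg T f n \<omega> / real n) \<longlonglongrightarrow> integral\<^sup>L QQ f"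
    by (rule mpt.birkhoff[OF mpt_T erg_T[OF erg] f])
  moreover have "AE \<omega> in QQ. (\<lambda>n. mpt.Sg R f n \<omega> / real n) \<longlonglongrightarrow> integral\<^sup>L QQ f"
    by (rule mpt.birkhoff[OF mpt_R erg_R[OF erg] f])
  ultimately have "AE \<omega> in M. (\<lambda>n. mpt.Sg T f n \<omega> / real n) \<longlonglongrightarrow> integral\<^sup>L QQ f
      \<and> (\<lambda>n. mpt.Sg R f n \<omega> / real n) \<longlonglongrightarrow> integral\<^sup>L QQ f"
    by (intro AE_transfer) (auto intro: AE_conjI)
  then show ?thesis
  proof eventually_elim
    case (elim \<omega>)
    have eq: "(\<lambda>(m, n). (\<Sum>i\<in>{- int m..int n}. f (iterz M T i \<omega>)) / real (m + n + 1)) =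
      (\<lambda>(m, n). (mpt.Sg T f (Suc n) \<omega> + mpt.Sg R f (Suc m) \<omega> + (- f \<omega>)) / real (m + n + 1))"
    proof (intro ext, clarify)
      fix m n
      show "(\<Sum>i\<in>{- int m..int n}. f (iterz M T i \<omega>)) / real (m + n + 1) =
        (mpt.Sg T f (Suc n) \<omega> + mpt.Sg R f (Suc m) \<omega> + (- f \<omega>)) / real (m + n + 1)"
        unfolding sum_split_int[of "\<lambda>i. f (iterz M T i \<omega>)"]
        by (simp add: mpt.Sg_def[OF mpt_T] mpt.Sg_def[OF mpt_R] iterz_nat iterz_neg iterz_0)
    qed
    show ?case unfolding eq by (rule combine_two_sided) (use elim in auto)
  qed
qed

end


context invsys begin

lemma card_int_range: "card {- int m..int n} = m + n + 1" by simp

lemma const_avg: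
  "(\<Sum>i\<in>{- int m..int n}. (c::real)) / real (m + n + 1) = c"
proof -
  have h: "(\<Sum>i\<in>{- int m..int n}. c) = real (m + n + 1) * c"
    by (simp only: sum_constant card_int_range)
  have "real (m + n + 1) \<noteq> 0" by simp
  then show ?thesis unfolding h by simp
qed

lemma fin_QQ: "finite_measure QQ" using prob_QQ unfolding prob_space_def by blast

lemma integrable_ind_QQ: "C \<in> sets M \<Longrightarrow> integrable QQ (indicator C :: 'a \<Rightarrow> real)"
  by (rule integrable_real_indicator) (auto simp: emeasure_QQ)

lemma integral_ind_QQ: "C \<in> sets M \<Longrightarrow> integral\<^sup>L QQ (indicator C :: 'a \<Rightarrow> real) = measure QQ C"
  using sets.sets_into_space by (simp add: Int_absorb2)

lemma ergodic_from_star: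
  assumes star: "\<forall>B\<in>sets M. \<forall>C\<in>sets M.
      ((\<lambda>(m, n). (\<Sum>i\<in>{- int m..int n}. measure M (B \<inter> iterz M T i ` C)) / real (m + n + 1))
        \<longlongrightarrow> measure M B * measure QQ C) sum_to_infty"
  shows "ergodic_for M T QQ"
  unfolding ergodic_for_def
proof (intro ballI impI)
  fix A assume A: "A \<in> sets M" and inv: "T -` A \<inter> space M = A"
  have As: "A \<subseteq> space M" using sets.sets_into_space[OF A] .
  have img: "A \<inter> iterz M T i ` A = A" for i
    using iterz_img[OF As, of i] inv_iterz[OF inv] As by auto
  have fe: "(\<lambda>(m, n). (\<Sum>i\<in>{- int m..int n}. measure M (A \<inter> iterz M T i ` A)) / real (m + n + 1))
     = (\<lambda>_. measure M A)"
  proof (intro ext, clarify)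
    fix m n
    show "(\<Sum>i\<in>{- int m..int n}. measure M (A \<inter> iterz M T i ` A)) / real (m + n + 1) = measure M A"
      unfolding img by (rule const_avg)
  qed
  have X: "((\<lambda>(m, n). (\<Sum>i\<in>{- int m..int n}. measure M (A \<inter> iterz M T i ` A)) / real (m + n + 1))
        \<longlongrightarrow> measure M A * measure QQ A) sum_to_infty"
    using star A by blast
  then have "((\<lambda>_. measure M A) \<longlongrightarrow> measure M A * measure QQ A) sum_to_infty"
    by (simp only: fe)
  then have e1: "measure M A = measure M A * measure QQ A"
    by (simp add: tendsto_const_iff[OF sum_to_infty_neq_bot])
  have e2: "measure QQ A = measure M A" using measure_QQ[OF A] q_inv[OF A inv] by simp
  have "measure QQ A * (measure QQ A - 1) = 0" using e1 e2 by (simp add: algebra_simps)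
  then show "measure QQ A = 0 \<or> measure QQ A = 1" by simp
qed

lemma ergodic_from_starstar:
  assumes ss: "\<forall>f :: 'a \<Rightarrow> real. integrable QQ f \<longrightarrow>
      (AE \<omega> in M. ((\<lambda>(m, n). (\<Sum>i\<in>{- int m..int n}. f (iterz M T i \<omega>)) / real (m + n + 1))
          \<longlongrightarrow> integral\<^sup>L QQ f) sum_to_infty)"
  shows "ergodic_for M T QQ"
  unfolding ergodic_for_def
proof (intro ballI impI)
  fix A assume A: "A \<in> sets M" and inv: "T -` A \<inter> space M = A"
  have "AE \<omega> in M. ((\<lambda>(m, n). (\<Sum>i\<in>{- int m..int n}. indicator A (iterz M T i \<omega>)) / real (m + n + 1))
          \<longlongrightarrow> integral\<^sup>L QQ (indicator A :: 'a \<Rightarrow> real)) sum_to_infty"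
    using ss integrable_ind_QQ[OF A] by blast
  then have ae: "AE \<omega> in M. ((\<lambda>(m, n). (\<Sum>i\<in>{- int m..int n}. indicator A (iterz M T i \<omega>)) / real (m + n + 1))
          \<longlongrightarrow> measure QQ A) sum_to_infty"
    unfolding integral_ind_QQ[OF A] .
  from AE_space ae have ae2: "AE \<omega> in M. indicator A \<omega> = measure QQ A"
  proof eventually_elim
    case (elim \<omega>)
    have ii: "indicator A (iterz M T i \<omega>) = (indicator A \<omega> :: real)" for i
      using inv_iterz[OF inv elim(1)] by (simp add: indicator_def)
    have fe: "(\<lambda>(m, n). (\<Sum>i\<in>{- int m..int n}. indicator A (iterz M T i \<omega>)) / real (m + n + 1))
       = (\<lambda>_. indicator A \<omega> :: real)"
    proof (intro ext, clarify)
      fix m n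
      show "(\<Sum>i\<in>{- int m..int n}. indicator A (iterz M T i \<omega>)) / real (m + n + 1) = (indicator A \<omega> :: real)"
        unfolding ii by (rule const_avg)
    qed
    have "((\<lambda>_. indicator A \<omega> :: real) \<longlongrightarrow> measure QQ A) sum_to_infty"
      using elim(2) by (simp only: fe)
    then show ?case by (simp add: tendsto_const_iff[OF sum_to_infty_neq_bot])
  qed
  have "\<exists>\<omega>. indicator A \<omega> = measure QQ A"
  proof (rule ccontr)
    assume na: "\<not> ?thesis"
    from ae2 have "AE \<omega> in M. False" by eventually_elim (use na in auto)
    then show False using AE_False by simp
  qed
  then obtain \<omega> where "indicator A \<omega> = measure QQ A" by blast
  then show "measure QQ A = 0 \<or> measure QQ A = 1" by (cases "\<omega> \<in> A") auto
qed

end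


context invsys begin

lemma star_from_ergodic:
  assumes erg: "ergodic_for M T QQ" and B: "B \<in> sets M" and C: "C \<in> sets M"
  shows "((\<lambda>(m, n). (\<Sum>i\<in>{- int m..int n}. measure M (B \<inter> iterz M T i ` C)) / real (m + n + 1))
           \<longlongrightarrow> measure M B * measure QQ C) sum_to_infty"
proof -
  have Cs: "C \<subseteq> space M" using sets.sets_into_space[OF C] .
  have Bs: "B \<subseteq> space M" using sets.sets_into_space[OF B] .
  have [measurable]: "iterz M T i \<in> measurable M M" for i by (rule iterz_meas)
  have [measurable]: "C \<in> sets M" "B \<in> sets M" using B C by auto
  define avg where "avg m n \<omega> = (\<Sum>j\<in>{- int m..int n}. indicator C (iterz M T j \<omega>)) / real (m + n + 1)"
    for m n \<omega>
  have ae: "AE \<omega> in M. ((\<lambda>(m, n). avg m n \<omega>) \<longlongrightarrow> measure QQ C) sum_to_infty"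
    using two_sided_AE[OF erg integrable_ind_QQ[OF C]] unfolding integral_ind_QQ[OF C] avg_def .
  have avg_meas[measurable]: "avg m n \<in> borel_measurable M" for m n
    unfolding avg_def by measurable
  have avg_bnd: "0 \<le> avg m n \<omega> \<and> avg m n \<omega> \<le> 1" for m n \<omega>
  proof -
    have "(\<Sum>j\<in>{- int m..int n}. indicator C (iterz M T j \<omega>)) \<le> (\<Sum>j\<in>{- int m..int n}. (1::real))"
      by (intro sum_mono) (simp add: indicator_def)
    also have "\<dots> = real (m + n + 1)" by (simp only: sum_constant card_int_range) simp
    finally have "(\<Sum>j\<in>{- int m..int n}. indicator C (iterz M T j \<omega>)) \<le> real (m + n + 1)" .
    moreover have "0 \<le> (\<Sum>j\<in>{- int m..int n}. (indicator C (iterz M T j \<omega>) :: real))"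
      by (intro sum_nonneg) simp
    ultimately show ?thesis unfolding avg_def by (simp add: divide_le_eq)
  qed
  have eq: "(\<Sum>i\<in>{- int m..int n}. measure M (B \<inter> iterz M T i ` C)) / real (m + n + 1)
      = (\<integral>\<omega>. indicator B \<omega> * avg n m \<omega> \<partial>M)" for m n
  proof -
    have m1: "measure M (B \<inter> iterz M T i ` C) = (\<integral>\<omega>. indicator B \<omega> * indicator C (iterz M T (- i) \<omega>) \<partial>M)" for i
    proof -
      have s: "B \<inter> iterz M T i ` C = B \<inter> (iterz M T (- i) -` C \<inter> space M)"
        by (simp add: iterz_img[OF Cs])
      have ms: "B \<inter> (iterz M T (- i) -` C \<inter> space M) \<in> sets M" by measurable
      have "measure M (B \<inter> iterz M T i ` C) = integral\<^sup>L M (indicator (B \<inter> (iterz M T (- i) -` C \<inter> space M)) :: 'a \<Rightarrow> real)"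
        unfolding s using sets.sets_into_space[OF ms] by (simp add: Int_absorb2)
      also have "\<dots> = (\<integral>\<omega>. indicator B \<omega> * indicator C (iterz M T (- i) \<omega>) \<partial>M)"
        by (rule Bochner_Integration.integral_cong) (auto simp: indicator_def)
      finally show ?thesis .
    qed
    have int: "integrable M (\<lambda>\<omega>. indicator B \<omega> * (indicator C (iterz M T (- i) \<omega>) :: real))" for i
      by (rule integrable_const_bound[where B=1]) (auto simp: indicator_def)
    have "(\<Sum>i\<in>{- int m..int n}. measure M (B \<inter> iterz M T i ` C))
        = (\<integral>\<omega>. (\<Sum>i\<in>{- int m..int n}. indicator B \<omega> * indicator C (iterz M T (- i) \<omega>)) \<partial>M)"
      unfolding m1 by (rule Bochner_Integration.integral_sum[symmetric]) (rule int)
    then have "(\<Sum>i\<in>{- int m..int n}. measure M (B \<inter> iterz M T i ` C)) / real (m + n + 1)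
        = (\<integral>\<omega>. (\<Sum>i\<in>{- int m..int n}. indicator B \<omega> * indicator C (iterz M T (- i) \<omega>)) / real (m + n + 1) \<partial>M)"
      by simp
    also have "\<dots> = (\<integral>\<omega>. indicator B \<omega> * avg n m \<omega> \<partial>M)"
    proof (rule Bochner_Integration.integral_cong[OF refl])
      fix \<omega>
      have "(\<Sum>i\<in>{- int m..int n}. indicator B \<omega> * indicator C (iterz M T (- i) \<omega>))
          = indicator B \<omega> * (\<Sum>i\<in>{- int m..int n}. indicator C (iterz M T (- i) \<omega>) :: real)"
        by (simp add: sum_distrib_left)
      also have "(\<Sum>i\<in>{- int m..int n}. indicator C (iterz M T (- i) \<omega>) :: real)
          = (\<Sum>j\<in>{- int n..int m}. indicator C (iterz M T j \<omega>))"
        by (rule sum_neg_int)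
      finally show "(\<Sum>i\<in>{- int m..int n}. indicator B \<omega> * indicator C (iterz M T (- i) \<omega>)) / real (m + n + 1)
          = indicator B \<omega> * avg n m \<omega>"
        unfolding avg_def by (simp add: add.commute)
    qed
    finally show ?thesis .
  qed
  show ?thesis
  proof (rule sum_to_infty_seq)
    fix p :: "nat \<Rightarrow> nat \<times> nat" assume p: "\<forall>k. k \<le> fst (p k) + snd (p k)"
    have fe: "(\<lambda>k. (\<lambda>(m, n). (\<Sum>i\<in>{- int m..int n}. measure M (B \<inter> iterz M T i ` C)) / real (m + n + 1)) (p k))
       = (\<lambda>k. \<integral>\<omega>. indicator B \<omega> * avg (snd (p k)) (fst (p k)) \<omega> \<partial>M)"
    proof (intro ext)
      fix k show "(\<lambda>(m, n). (\<Sum>i\<in>{- int m..int n}. measure M (B \<inter> iterz M T i ` C)) / real (m + n + 1)) (p k)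
          = (\<integral>\<omega>. indicator B \<omega> * avg (snd (p k)) (fst (p k)) \<omega> \<partial>M)"
        using eq[of "fst (p k)" "snd (p k)"] by (simp add: case_prod_beta)
    qed
    have "(\<lambda>k. \<integral>\<omega>. indicator B \<omega> * avg (snd (p k)) (fst (p k)) \<omega> \<partial>M) \<longlonglongrightarrow>
        (\<integral>\<omega>. indicator B \<omega> * measure QQ C \<partial>M)"
    proof (rule integral_dominated_convergence[where w="\<lambda>_. 1"])
      show "AE \<omega> in M. (\<lambda>k. indicator B \<omega> * avg (snd (p k)) (fst (p k)) \<omega>) \<longlonglongrightarrow> indicator B \<omega> * measure QQ C"
        using ae
      proof eventually_elim
        case (elim \<omega>)
        have "(\<lambda>k. (\<lambda>(m, n). avg m n \<omega>) (snd (p k), fst (p k))) \<longlonglongrightarrow> measure QQ C"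
          by (rule sum_to_infty_seq2[OF elim]) (use p in \<open>auto simp: add.commute\<close>)
        then show ?case by (intro tendsto_mult_left) simp
      qed
      show "AE \<omega> in M. norm (indicator B \<omega> * avg (snd (p k)) (fst (p k)) \<omega>) \<le> 1" for k
        using avg_bnd by (auto simp: indicator_def)
    qed auto
    moreover have "(\<integral>\<omega>. indicator B \<omega> * measure QQ C \<partial>M) = measure M B * measure QQ C"
      using Bs by (simp add: Int_absorb2)
    ultimately show "(\<lambda>k. (\<lambda>(m, n). (\<Sum>i\<in>{- int m..int n}. measure M (B \<inter> iterz M T i ` C)) / real (m + n + 1)) (p k))
        \<longlonglongrightarrow> measure M B * measure QQ C"
      unfolding fe by simp
  qed
qed

end

theorem theorem4p7:
  fixes M :: "'a measure" and T :: "'a \<Rightarrow> 'a"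
  assumes P: "prob_space M"
    and T_bij: "bij_betw T (space M) (space M)"
    and T_meas: "T \<in> measurable M M"
    and Tinv_meas: "the_inv_into (space M) T \<in> measurable M M"
    and lim_ex: "\<forall>A\<in>sets M. convergent (cesaro_avg M T A)"
  shows "\<exists>Q. sets Q = sets M \<and> prob_space Q
            \<and> (\<forall>A\<in>sets M. measure Q A = lim (cesaro_avg M T A))
            \<and> (\<forall>A\<in>sets M. measure Q (T -` A \<inter> space M) = measure Q A)
            \<and> (ergodic_for M T Q \<longleftrightarrow>
                 (\<forall>B\<in>sets M. \<forall>C\<in>sets M.
                    ((\<lambda>(m, n). (\<Sum>i\<in>{- int m..int n}. measure M (B \<inter> iterz M T i ` C))
                                 / real (m + n + 1))
                      \<longlongrightarrow> measure M B * measure Q C) sum_to_infty))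
            \<and> (ergodic_for M T Q \<longleftrightarrow>
                 (\<forall>f :: 'a \<Rightarrow> real. integrable Q f \<longrightarrow>
                    (AE \<omega> in M.
                      ((\<lambda>(m, n). (\<Sum>i\<in>{- int m..int n}. f (iterz M T i \<omega>))
                                   / real (m + n + 1))
                        \<longlongrightarrow> integral\<^sup>L Q f) sum_to_infty)))"
proof -
  interpret invsys M T "the_inv_into (space M) T"
    using P T_bij T_meas Tinv_meas lim_ex unfolding invsys_def invsys_axioms_def by auto
  show ?thesis
  proof (intro exI[of _ QQ] conjI)
    show "sets QQ = sets M" by simp
    show "prob_space QQ" by (rule prob_QQ)
    show "\<forall>A\<in>sets M. measure QQ A = lim (cesaro_avg M T A)" by (simp add: measure_QQ q_def)
    show "\<forall>A\<in>sets M. measure QQ (T -` A \<inter> space M) = measure QQ A"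
      by (simp add: measure_QQ q_Tinv measurable_sets[OF T_meas])
    show "ergodic_for M T QQ \<longleftrightarrow>
                 (\<forall>B\<in>sets M. \<forall>C\<in>sets M.
                    ((\<lambda>(m, n). (\<Sum>i\<in>{- int m..int n}. measure M (B \<inter> iterz M T i ` C))
                                 / real (m + n + 1))
                      \<longlongrightarrow> measure M B * measure QQ C) sum_to_infty)"
      using star_from_ergodic ergodic_from_star by blast
    show "ergodic_for M T QQ \<longleftrightarrow>
                 (\<forall>f :: 'a \<Rightarrow> real. integrable QQ f \<longrightarrow>
                    (AE \<omega> in M.
                      ((\<lambda>(m, n). (\<Sum>i\<in>{- int m..int n}. f (iterz M T i \<omega>))
                                   / real (m + n + 1))
                        \<longlongrightarrow> integral\<^sup>L QQ f) sum_to_infty))"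
      using two_sided_AE ergodic_from_starstar by blast
  qed
qed

end
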